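(* Let $C>0$, $p\in(0,1]$ and $\epsilon\in(0,1)$, and let $$\tau(\epsilon) := 1+\ln(1/\epsilon)+\sqrt{\ln^2(1/\epsilon)+2\ln(1/\epsilon)}.$$ Let $S$ be a finite set of elements, each $i\in S$ having a weight $w_i$ with $0\le w_i\le C$, such that $$\sum_{i\in S} w_i \ \ge\ \frac{\tau(\epsilon)}{p}\cdot C.$$ Suppose each element of $S$ is active independently with probability $p$. Then, with probability at least $1-\epsilon$, the total weight of the active elements of $S$ is at least $C$.
   Context: This is used in a knapsack setting with capacity $C$, where it is a standing assumption of the paper that every individual item fits in the knapsack, i.e. $w_i\le C$ for every item. *)

theory Defs
  imports "HOL-Probability.Probability"
begin

definition tau :: "real \<Rightarrow> real" where
  "tau \<epsilon> = 1 + ln (1 / \<epsilon>) + sqrt ((ln (1 / \<epsilon>))\<^sup>2 + 2 * ln (1 / \<epsilon>))"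

definition active_pmf :: "'a set \<Rightarrow> real \<Rightarrow> ('a \<Rightarrow> bool) pmf" where
  "active_pmf S p = Pi_pmf S False (\<lambda>_. bernoulli_pmf p)"

end

theory Submission
  imports Defs
begin

lemma ln_le_half: fixes m :: real assumes "1 \<le> m" shows "ln m \<le> (m - 1/m)/2"
proof -
  let ?f = "\<lambda>x::real. (x - 1/x)/2 - ln x"
  have "?f 1 \<le> ?f m"
  proof (rule DERIV_nonneg_imp_nondecreasing[OF assms])
    fix x :: real assume x: "1 \<le> x" "x \<le> m"
    have "(?f has_real_derivative ((1 + 1/x^2)/2 - 1/x)) (at x)"
      using x by (auto intro!: derivative_eq_intros simp: field_simps power2_eq_square)
    moreover have "(1 + 1/x^2)/2 - 1/x = (x-1)^2/(2*x^2)" using x by (simp add: field_simps power2_eq_square)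
    moreover have "(x-1)^2/(2*x^2) \<ge> 0" by simp
    ultimately show "\<exists>y. (?f has_real_derivative y) (at x) \<and> 0 \<le> y" by metis
  qed
  then show ?thesis by simp
qed

lemma exp_convex_aux: fixes t x :: real assumes "0 \<le> x" "x \<le> 1"
  shows "exp (- (t * x)) \<le> (1 - x) + x * exp (- t)"
  using convex_onD[OF exp_convex, of x 0 "-t"] assms by (simp add: algebra_simps)

lemma final_ineq: fixes m L :: real assumes "L > 0" "m \<ge> 1 + L + sqrt (L^2 + 2*L)"
  shows "m * exp (1 - m) \<le> exp (-L)"
proof -
  have s: "sqrt (L^2 + 2*L) \<ge> 0" using assms by simp
  have m1: "m \<ge> 1" using assms s by linarith
  have "(m - 1 - L)^2 \<ge> (sqrt (L^2 + 2*L))^2"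
    using assms s by (intro power_mono) auto
  also have "(sqrt (L^2 + 2*L))^2 = L^2 + 2*L" using assms by simp
  finally have q: "(m-1)^2 \<ge> 2*m*L" by (simp add: power2_eq_square algebra_simps)
  have "(m-1)^2/(2*m) \<ge> L" using q m1 by (simp add: field_simps)
  moreover have "(m - 1/m)/2 - (m - 1) = -((m-1)^2/(2*m))" using m1 by (simp add: field_simps power2_eq_square)
  ultimately have "ln m + 1 - m \<le> -L" using ln_le_half[OF m1] by linarith
  hence "exp (ln m + 1 - m) \<le> exp (-L)" by simp
  moreover have "exp (ln m + 1 - m) = m * exp (1 - m)" using m1 by (simp add: exp_add exp_diff)
  ultimately show ?thesis by simp
qed

theorem lemma1:
  fixes S :: "'a set" and w :: "'a \<Rightarrow> real" and C p \<epsilon> :: real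
  assumes "C > 0" and "0 < p" and "p \<le> 1" and "0 < \<epsilon>" and "\<epsilon> < 1"
    and "finite S"
    and "\<And>i. i \<in> S \<Longrightarrow> 0 \<le> w i \<and> w i \<le> C"
    and "(\<Sum>i\<in>S. w i) \<ge> tau \<epsilon> / p * C"
  shows "measure_pmf.prob (active_pmf S p)
           {A. (\<Sum>i\<in>{i\<in>S. A i}. w i) \<ge> C} \<ge> 1 - \<epsilon>"
proof -
  define x where "x i = w i / C" for i
  define X where "X A = (\<Sum>i\<in>S. if A i then x i else 0)" for A :: "'a \<Rightarrow> bool"
  define \<mu> where "\<mu> = p * (\<Sum>i\<in>S. x i)"
  define L where "L = ln (1/\<epsilon>)"
  have x01: "0 \<le> x i \<and> x i \<le> 1" if "i \<in> S" for i
    using assms(1) assms(7)[OF that] by (auto simp: x_def field_simps)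
  have L: "L > 0" using assms(4,5) by (simp add: L_def)
  have tauL: "tau \<epsilon> = 1 + L + sqrt (L^2 + 2*L)" by (simp add: tau_def L_def)
  have "p * (\<Sum>i\<in>S. w i) \<ge> tau \<epsilon> * C"
    using assms(8) assms(2) by (simp add: field_simps)
  hence mu: "\<mu> \<ge> tau \<epsilon>"
    using assms(1) by (simp add: \<mu>_def x_def sum_divide_distrib[symmetric] field_simps)
  have s: "sqrt (L^2 + 2*L) \<ge> 0" using L by simp
  have mu1: "\<mu> \<ge> 1" using mu tauL L s by linarith
  define t where "t = ln \<mu>"
  have t0: "t \<ge> 0" using mu1 by (simp add: t_def)
  have et: "exp (- t) = 1 / \<mu>" using mu1 by (simp add: t_def exp_minus inverse_eq_divide)
  let ?M = "active_pmf S p"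
  have fin: "finite (set_pmf (active_pmf S p))"
    unfolding active_pmf_def using assms(6) by (subst set_Pi_pmf) auto
  have int: "integrable ?M f" for f :: "('a\<Rightarrow>bool)\<Rightarrow>real"
    by (rule integrable_measure_pmf_finite[OF fin])
  have ev: "{A. (\<Sum>i\<in>{i\<in>S. A i}. w i) \<ge> C} = UNIV - {A. X A < 1}"
  proof -
    have "(\<Sum>i\<in>{i\<in>S. A i}. w i) = C * X A" for A
      using assms(1,6) by (simp add: sum.inter_filter X_def x_def sum_distrib_left if_distrib cong: if_cong)
    thus ?thesis using assms(1) by auto
  qed
  have "measure_pmf.prob ?M {A. X A < 1} = measure_pmf.expectation ?M (indicator {A. X A < 1})"
    by simp
  also have "\<dots> \<le> measure_pmf.expectation ?M (\<lambda>A. exp (t * (1 - X A)))"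
    using t0 by (intro integral_mono[OF int int]) (auto simp: indicator_def)
  also have "\<dots> = measure_pmf.expectation ?M (\<lambda>A. exp t * (\<Prod>i\<in>S. exp (- (t * (if A i then x i else 0)))))"
  proof (intro Bochner_Integration.integral_cong refl)
    fix A :: "'a \<Rightarrow> bool"
    have "exp (t * (1 - X A)) = exp t * exp (\<Sum>i\<in>S. - (t * (if A i then x i else 0)))"
      by (simp add: X_def algebra_simps sum_distrib_left sum_negf exp_add[symmetric] exp_diff)
    also have "\<dots> = exp t * (\<Prod>i\<in>S. exp (- (t * (if A i then x i else 0))))"
      using assms(6) by (simp add: exp_sum)
    finally show "exp (t * (1 - X A)) = exp t * (\<Prod>i\<in>S. exp (- (t * (if A i then x i else 0))))" .
  qed
  also have "\<dots> = exp t * measure_pmf.expectation ?M (\<lambda>A. \<Prod>i\<in>S. exp (- (t * (if A i then x i else 0))))"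
    by simp
  also have "measure_pmf.expectation ?M (\<lambda>A. \<Prod>i\<in>S. exp (- (t * (if A i then x i else 0))))
      = (\<Prod>i\<in>S. measure_pmf.expectation (bernoulli_pmf p) (\<lambda>b. exp (- (t * (if b then x i else 0)))))"
    unfolding active_pmf_def
    by (rule expectation_prod_Pi_pmf[OF assms(6)]) (auto intro: integrable_measure_pmf_finite)
  also have "\<dots> = (\<Prod>i\<in>S. exp (- (t * x i)) * p + (1 - p))"
    using assms(2,3) by simp
  also have "\<dots> \<le> (\<Prod>i\<in>S. exp (- (p * x i * (1 - 1/\<mu>))))"
  proof (intro prod_mono conjI)
    fix i assume i: "i \<in> S"
    show "0 \<le> exp (- (t * x i)) * p + (1 - p)" using assms(2,3) by simp
    have "exp (- (t * x i)) \<le> (1 - x i) + x i * exp (- t)" using x01[OF i] by (intro exp_convex_aux) auto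
    hence "exp (- (t * x i)) * p + (1 - p) \<le> ((1 - x i) + x i * (1/\<mu>)) * p + (1 - p)"
      using assms(2) et by (intro add_right_mono mult_right_mono) auto
    also have "\<dots> = 1 + (- (p * x i * (1 - 1/\<mu>)))" by (simp add: algebra_simps)
    also have "\<dots> \<le> exp (- (p * x i * (1 - 1/\<mu>)))" by (rule exp_ge_add_one_self)
    finally show "exp (- (t * x i)) * p + (1 - p) \<le> exp (- (p * x i * (1 - 1/\<mu>)))" .
  qed
  also have "\<dots> = exp (- (\<mu> * (1 - 1/\<mu>)))"
    using assms(6) by (simp add: exp_sum[symmetric] sum_negf \<mu>_def sum_distrib_left sum_distrib_right)
  also have "\<dots> = exp (1 - \<mu>)" using mu1 by (simp add: field_simps)
  finally have "measure_pmf.prob ?M {A. X A < 1} \<le> exp t * exp (1 - \<mu>)"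
    using t0 by (simp add: mult_left_mono)
  also have "exp t * exp (1 - \<mu>) = \<mu> * exp (1 - \<mu>)" using mu1 by (simp add: t_def)
  also have "\<dots> \<le> exp (- L)" using final_ineq[OF L] mu tauL by simp
  also have "exp (- L) = \<epsilon>" using assms(4) by (simp add: L_def ln_div exp_minus)
  finally have le: "measure_pmf.prob ?M {A. X A < 1} \<le> \<epsilon>" .
  have "measure_pmf.prob ?M (UNIV - {A. X A < 1}) = 1 - measure_pmf.prob ?M {A. X A < 1}"
    using measure_pmf.prob_compl[of "{A. X A < 1}" "active_pmf S p"] by simp
  thus ?thesis using le ev by simp
qed

end
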